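(* Assume $\tau_1+\tau_2=1$, parametrize $\tau_2=\frac12(1+\nu_1-\nu_2)$, $\tau_3=\nu_1\nu_2+\frac{(\alpha+\beta)(\nu_1+\nu_2-1)}{2}$, and assume $\alpha+\nu_1+\nu_2\notin\mathbb Z$. Set $\widetilde\alpha=-\alpha-\beta-\nu_1-\nu_2$, $\widetilde\beta=\beta$ and, for $n\ge0$, $\psi_n(x)=x^{\nu_2-1}\widehat P_n^{(\widetilde\alpha,\widetilde\beta)}(1/x)$ on $x\in(0,1)$. Then (i) $M\psi_n=\widetilde\lambda_n\psi_n$ with $\widetilde\lambda_n=n(n-1)+(2-\nu_1-\nu_2-\alpha)n+\tau_0+\nu_1\nu_2+\tfrac12(\alpha-1)(\nu_1+\nu_2-1)$; (ii) $L$ acts tridiagonally on $\{\psi_n\}$: for every $n\ge0$ there are constants $\xi_n,\eta_n,\zeta_n$ with $L\psi_n=\xi_n\psi_{n+1}+\eta_n\psi_n+\zeta_n\psi_{n-1}$ (where $\psi_{-1}:=0$).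
   Context: $L=x(1-x)\partial_x^2+\big(\alpha+1-(\alpha+\beta+2)x\big)\partial_x$ with real $\alpha,\beta$, $X$ is multiplication by $x$, and $M=\tau_1XL+\tau_2LX+\tau_3X+\tau_0$ with real $\tau_i$. For parameters $a,b$ with $a+b\notin\mathbb Z$, the monic Jacobi polynomial is $\widehat P_n^{(a,b)}(t)=\frac{(-1)^n(a+1)_n}{(n+a+b+1)_n}{}_2F_1(-n,n+a+b+1;a+1;t)$, where $(c)_n=c(c+1)\cdots(c+n-1)$; it is the monic degree-$n$ eigenpolynomial of $t(1-t)\partial_t^2+(a+1-(a+b+2)t)\partial_t$ with eigenvalue $-n(n+a+b+1)$. *)

theory Defs
  imports "HOL-Analysis.Analysis"
begin

definition Lop :: "real \<Rightarrow> real \<Rightarrow> (real \<Rightarrow> real) \<Rightarrow> real \<Rightarrow> real" where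
  "Lop \<alpha> \<beta> f x = x * (1 - x) * deriv (deriv f) x + (\<alpha> + 1 - (\<alpha> + \<beta> + 2) * x) * deriv f x"

definition Mop :: "real \<Rightarrow> real \<Rightarrow> real \<Rightarrow> real \<Rightarrow> real \<Rightarrow> real \<Rightarrow> (real \<Rightarrow> real) \<Rightarrow> real \<Rightarrow> real" where
  "Mop \<alpha> \<beta> \<tau>0 \<tau>1 \<tau>2 \<tau>3 f x =
     \<tau>1 * (x * Lop \<alpha> \<beta> f x) + \<tau>2 * Lop \<alpha> \<beta> (\<lambda>y. y * f y) x + \<tau>3 * (x * f x) + \<tau>0 * f x"

text \<open>Monic Jacobi polynomial
  (-1)^n (a+1)_n / (n+a+b+1)_n * 2F1(-n, n+a+b+1; a+1; t), with the terminating 2F1 written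
  as a finite sum and the factor (a+1)_n/(a+1)_k written as (a+k+1)_(n-k).\<close>
definition jacobi_monic :: "real \<Rightarrow> real \<Rightarrow> nat \<Rightarrow> real \<Rightarrow> real" where
  "jacobi_monic a b n t =
     (\<Sum>k\<le>n. (-1) ^ n * pochhammer (a + real k + 1) (n - k)
              * pochhammer (- real n) k * pochhammer (real n + a + b + 1) k
              / (pochhammer (real n + a + b + 1) n * fact k) * t ^ k)"

end

theory Submission
  imports Defs "HOL-Computational_Algebra.Polynomial"
begin


definition Fo :: "real \<Rightarrow> real poly \<Rightarrow> real poly" where
  "Fo s p = smult s p - [:0,1:] * pderiv p"

lemma deriv_form:
  assumes f: "\<And>y. y > 0 \<Longrightarrow> f y = y powr s * poly p (1/y)" and x: "x > 0"
  shows "deriv f x = x powr (s-1) * poly (Fo s p) (1/x)"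
proof -
  have d: "((\<lambda>y. y powr s * poly p (1/y)) has_real_derivative
        s * x powr (s-1) * poly p (1/x) + x powr s * (poly (pderiv p) (1/x) * (- 1 / x^2))) (at x)"
    using x by (auto intro!: derivative_eq_intros DERIV_chain2[OF poly_DERIV] simp: power2_eq_square)
  have "(f has_real_derivative
        s * x powr (s-1) * poly p (1/x) + x powr s * (poly (pderiv p) (1/x) * (- 1 / x^2))) (at x)"
    by (rule has_field_derivative_transform_within_open[OF d, of "{0<..}"]) (use x f in auto)
  then have "deriv f x = s * x powr (s-1) * poly p (1/x) + x powr s * (poly (pderiv p) (1/x) * (- 1 / x^2))"
    by (rule DERIV_imp_deriv)
  also have "\<dots> = x powr (s-1) * poly (Fo s p) (1/x)"
    using x by (simp add: Fo_def powr_diff field_simps power2_eq_square)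
  finally show ?thesis .
qed

lemma deriv2_form:
  assumes f: "\<And>y. y > 0 \<Longrightarrow> f y = y powr s * poly p (1/y)" and x: "x > 0"
  shows "deriv (deriv f) x = x powr (s-1-1) * poly (Fo (s-1) (Fo s p)) (1/x)"
proof -
  have "\<And>y. y > 0 \<Longrightarrow> deriv f y = y powr (s-1) * poly (Fo s p) (1/y)"
    using deriv_form[OF f] by auto
  then show ?thesis using deriv_form x by blast
qed

definition Lt :: "real \<Rightarrow> real \<Rightarrow> real \<Rightarrow> real poly \<Rightarrow> real poly" where
  "Lt al be s p = [:-1,1:] * Fo (s-1) (Fo s p) + [:-(al+be+2), al+1:] * Fo s p"

lemma Lop_form:
  assumes f: "\<And>y. y > 0 \<Longrightarrow> f y = y powr s * poly p (1/y)" and x: "x > 0"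
  shows "Lop al be f x = x powr s * poly (Lt al be s p) (1/x)"
proof -
  have e1: "x powr (s-1-1) = x powr s / x^2" "x powr (s-1) = x powr s / x"
    using x by (simp_all add: powr_diff power2_eq_square powr_add[symmetric])
  have d1: "deriv f x = x powr s / x * poly (Fo s p) (1/x)" using deriv_form[OF f x] e1 by simp
  have d2: "deriv (deriv f) x = x powr s / x^2 * poly (Fo (s-1) (Fo s p)) (1/x)" using deriv2_form[OF f x] e1 by simp
  show ?thesis
    unfolding Lop_def d1 d2 Lt_def using x
    by (simp add: field_simps power2_eq_square)
qed


definition Xp :: "real poly \<Rightarrow> real poly" where "Xp p = [:0,1:]  *  p"
definition JD :: "real \<Rightarrow> real \<Rightarrow> real poly \<Rightarrow> real poly" where
  "JD a b p = [:0,1,-1:]  *  pderiv (pderiv p) + [:a+1, -(a+b+2):]  *  pderiv p"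

lemmas psimps = Xp_def JD_def Lt_def Fo_def pderiv_mult pderiv_add pderiv_smult pderiv_diff pderiv_minus pderiv_pCons

lemma F6: fixes sv al be a :: real
  defines "c2 \<equiv> (2 * sv+al+be+1+a)/2"
  shows "Lt al be sv p = smult (-1-c2) (Xp (JD a be p)) + smult c2 (JD a be (Xp p))
     + smult (sv * (sv+al) + c2 * (a+be+2)) (Xp p) + smult (-sv * (sv+al+be+1) - c2 * (a+1)) p"
proof (rule poly_eq_poly_eq_iff[THEN iffD1], rule ext)
  fix t show "poly (Lt al be sv p) t = poly (smult (-1-c2) (Xp (JD a be p)) + smult c2 (JD a be (Xp p))
     + smult (sv * (sv+al) + c2 * (a+be+2)) (Xp p) + smult (-sv * (sv+al+be+1) - c2 * (a+1)) p) t"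
    by (simp add: psimps c2_def field_simps)
qed

lemma F5: fixes a b :: real
  defines "g \<equiv> a+b+1"
  shows "JD a b (JD a b (Xp p)) - smult 2 (JD a b (Xp (JD a b p))) + Xp (JD a b (JD a b p))
    = smult (-2) (JD a b (Xp p) + Xp (JD a b p)) + smult (g^2-1) (Xp p) + smult 2 (JD a b p)
      + smult ((a+1) * (1-g)) p"
proof (rule poly_eq_poly_eq_iff[THEN iffD1], rule ext)
  fix t show "poly (JD a b (JD a b (Xp p)) - smult 2 (JD a b (Xp (JD a b p))) + Xp (JD a b (JD a b p))) t
    = poly (smult (-2) (JD a b (Xp p) + Xp (JD a b p)) + smult (g^2-1) (Xp p) + smult 2 (JD a b p)
      + smult ((a+1) * (1-g)) p) t"
    by (simp add: psimps g_def algebra_simps power2_eq_square)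
qed

lemma Mid:
  shows "smult ((1 - \<nu>1 + \<nu>2)/2) (Lt al be (\<nu>2-1) p) + smult ((1 + \<nu>1 - \<nu>2)/2) (Lt al be (\<nu>2-1+1) p)
     + smult (\<nu>1  *  \<nu>2 + (al + be)  *  (\<nu>1 + \<nu>2 - 1) / 2) p + smult t0 (Xp p)
    = smult (t0 + \<nu>1  *  \<nu>2 + (al - 1)  *  (\<nu>1 + \<nu>2 - 1) / 2) (Xp p) - Xp (JD (-al-be-\<nu>1-\<nu>2) be p)"
proof (rule poly_eq_poly_eq_iff[THEN iffD1], rule ext)
  fix t show "poly (smult ((1 - \<nu>1 + \<nu>2)/2) (Lt al be (\<nu>2-1) p) + smult ((1 + \<nu>1 - \<nu>2)/2) (Lt al be (\<nu>2-1+1) p)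
     + smult (\<nu>1  *  \<nu>2 + (al + be)  *  (\<nu>1 + \<nu>2 - 1) / 2) p + smult t0 (Xp p)) t
    = poly (smult (t0 + \<nu>1  *  \<nu>2 + (al - 1)  *  (\<nu>1 + \<nu>2 - 1) / 2) (Xp p) - Xp (JD (-al-be-\<nu>1-\<nu>2) be p)) t"
    by (simp add: psimps field_simps)
qed



lemma coeff_JD: "coeff (JD a b p) k =
   real (k+1) * (real (k+1) + a) * coeff p (k+1) - real k * (real k + a + b + 1) * coeff p k"
proof (cases k)
  case 0 then show ?thesis by (simp add: JD_def coeff_pderiv algebra_simps)
next
  case (Suc j) then show ?thesis
    by (cases j) (simp_all add: JD_def coeff_pderiv algebra_simps)
qed

lemma JD_add: "JD a b (p + q) = JD a b p + JD a b q"
  by (rule poly_eq_poly_eq_iff[THEN iffD1]) (simp add: JD_def pderiv_add algebra_simps fun_eq_iff)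
lemma JD_diff: "JD a b (p - q) = JD a b p - JD a b q"
  by (rule poly_eq_poly_eq_iff[THEN iffD1]) (simp add: JD_def pderiv_diff algebra_simps fun_eq_iff)
lemma JD_smult: "JD a b (smult c p) = smult c (JD a b p)"
  by (rule poly_eq_poly_eq_iff[THEN iffD1]) (simp add: JD_def pderiv_smult algebra_simps fun_eq_iff)
lemma JD_0: "JD a b 0 = 0" by (simp add: JD_def)

definition jc :: "real \<Rightarrow> real \<Rightarrow> nat \<Rightarrow> nat \<Rightarrow> real" where
  "jc a b n k = (-1) ^ n * pochhammer (a + real k + 1) (n - k)
              * pochhammer (- real n) k * pochhammer (real n + a + b + 1) k
              / (pochhammer (real n + a + b + 1) n * fact k)"

definition JP :: "real \<Rightarrow> real \<Rightarrow> nat \<Rightarrow> real poly" where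
  "JP a b n = (\<Sum>k\<le>n. monom (jc a b n k) k)"

lemma poly_JP: "poly (JP a b n) t = jacobi_monic a b n t"
  by (simp add: JP_def jacobi_monic_def poly_sum poly_monom jc_def)

lemma coeff_JP: "coeff (JP a b n) j = (if j \<le> n then jc a b n j else 0)"
  by (simp add: JP_def coeff_sum coeff_monom)

lemma jc_nn:
  assumes g: "a + b \<notin> \<int>"
  shows "jc a b n n = 1"
proof -
  have "pochhammer (real n + a + b + 1) n \<noteq> 0"
  proof
    assume "pochhammer (real n + a + b + 1) n = 0"
    then obtain k where "real n + a + b + 1 = - real k" by (auto simp: pochhammer_eq_0_iff)
    then have "a + b = - real k - real n - 1" by simp
    then have "a + b \<in> \<int>" by simp
    with g show False by simp
  qed
  moreover have "pochhammer (- real n) n = (-1)^n * fact n"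
    by (simp add: pochhammer_minus pochhammer_fact)
  ultimately show ?thesis by (simp add: jc_def)
qed

lemma jc_rec:
  assumes "k < n"
  shows "real (k+1) * (real (k+1) + a) * jc a b n (k+1) = (real k - real n) * (real k + real n + a + b + 1) * jc a b n k"
proof -
  obtain m where m: "n - k = Suc m" using assms by (metis Suc_diff_Suc)
  have m2: "n - (k+1) = m" using m by simp
  define Z where "Z = (-1) ^ n * pochhammer (a + real k + 2) m
              * pochhammer (- real n) k * pochhammer (real n + a + b + 1) k
              / (pochhammer (real n + a + b + 1) n * fact k)"
  have c0: "jc a b n k = Z * (a + real k + 1)"
    unfolding jc_def Z_def m pochhammer_rec by (simp add: algebra_simps)
  have c1: "jc a b n (k+1) = Z * ((- real n + real k) * (real n + a + b + 1 + real k)) / (real k + 1)"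
    unfolding jc_def Z_def m2 by (simp add: pochhammer_Suc field_simps add_ac)
  show ?thesis unfolding c0 c1 by (simp add: field_simps)
qed

lemma JD_JP:
  "JD a b (JP a b n) = smult (- (real n * (real n + a + b + 1))) (JP a b n)"
proof (rule poly_eqI)
  fix k
  show "coeff (JD a b (JP a b n)) k = coeff (smult (- (real n * (real n + a + b + 1))) (JP a b n)) k"
  proof (cases "k < n")
    case True
    show ?thesis using jc_rec[OF True, of a b] True
      by (simp add: coeff_JD coeff_JP algebra_simps)
  next
    case False
    then show ?thesis by (cases "k = n") (auto simp: coeff_JD coeff_JP algebra_simps)
  qed
qed



lemma Xp_pCons: "Xp p = pCons 0 p" by (simp add: Xp_def)
lemma Xp_smult: "Xp (smult c p) = smult c (Xp p)" by (simp add: Xp_def)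

lemma coeff_JD_zero:
  assumes "\<And>j. j \<ge> m \<Longrightarrow> coeff p j = 0" "j \<ge> m"
  shows "coeff (JD a b p) j = 0"
  using assms by (simp add: coeff_JD)

lemma coeff_JP_gt: "j > n \<Longrightarrow> coeff (JP a b n) j = 0" by (simp add: coeff_JP)

lemma tri:
  fixes a b :: real
  assumes g: "a + b \<notin> \<int>"
  shows "\<exists>w w'. Xp (JP a b n) = JP a b (Suc n) + smult w (JP a b n)
          + (if n = 0 then 0 else smult w' (JP a b (n-1)))"
proof -
  let ?P = "JP a b"
  define gg where "gg = a + b + 1"
  define \<mu> where "\<mu> m = - (real m * (real m + a + b + 1))" for m
  have JDP: "JD a b (?P m) = smult (\<mu> m) (?P m)" for m by (simp add: JD_JP \<mu>_def)
  have lead: "coeff (?P m) m = 1" for m using jc_nn[OF g] by (simp add: coeff_JP)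
  define r0 where "r0 = Xp (?P n) - ?P (Suc n)"
  have r0z: "coeff r0 j = 0" if "j \<ge> n+1" for j
  proof (cases "j = n+1")
    case True then show ?thesis using lead[of n] lead[of "Suc n"] by (simp add: r0_def Xp_pCons)
  next
    case False then have "j > n + 1" using that by simp
    then obtain i where "j = Suc i" "i > n" by (cases j) auto
    then show ?thesis by (simp add: r0_def Xp_pCons coeff_JP_gt)
  qed
  define w where "w = coeff r0 n"
  define r1 where "r1 = r0 - smult w (?P n)"
  have r1z: "coeff r1 j = 0" if "j \<ge> n" for j
  proof (cases "j = n")
    case True then show ?thesis using lead[of n] by (simp add: r1_def w_def)
  next
    case False then show ?thesis using that r0z[of j] by (simp add: r1_def coeff_JP_gt)
  qed
  define w' where "w' = coeff r1 (n-1)"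
  define r where "r = r1 - (if n = 0 then 0 else smult w' (?P (n-1)))"
  have rz: "coeff r j = 0" if "j + 1 \<ge> n" for j
  proof (cases "n = 0")
    case True then show ?thesis using r1z by (simp add: r_def)
  next
    case False
    show ?thesis
    proof (cases "j = n - 1")
      case True then show ?thesis using lead[of "n-1"] False by (simp add: r_def w'_def)
    next
      case F2: False then have "j \<ge> n" "j > n - 1" using that False by auto
      then show ?thesis using r1z[of j] False by (simp add: r_def coeff_JP_gt)
    qed
  qed
  define Q where "Q p = JD a b (JD a b p) - smult (2 * \<mu> n) (JD a b p) + smult ((\<mu> n)^2) p
     + smult 2 (JD a b p) + smult (2 * \<mu> n) p - smult (gg^2 - 1) p" for p
  define qv where "qv m = (\<mu> m - \<mu> n)^2 + 2 * (\<mu> m + \<mu> n) - (gg^2 - 1)" for m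
  have Qlin: "Q (p - q) = Q p - Q q" "Q (smult c p) = smult c (Q p)" "Q 0 = 0" for p q c
    by (rule poly_eq_poly_eq_iff[THEN iffD1], simp add: fun_eq_iff Q_def JD_diff JD_smult JD_0 algebra_simps)+
  have QP: "Q (?P m) = smult (qv m) (?P m)" for m
    by (rule poly_eq_poly_eq_iff[THEN iffD1], simp add: fun_eq_iff Q_def qv_def JDP JD_smult algebra_simps power2_eq_square)
  have qv_fact: "qv m = ((real m - real n)^2 - 1) * ((real m + real n + gg)^2 - 1)" for m
    by (simp add: qv_def \<mu>_def gg_def power2_eq_square algebra_simps)
  have qvS: "qv (Suc n) = 0" by (simp add: qv_fact)
  have qvP: "n \<noteq> 0 \<Longrightarrow> qv (n - 1) = 0" by (simp add: qv_fact of_nat_diff)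
  have QX: "Q (Xp (?P n)) = smult (2 * \<mu> n + (a+1)*(1-gg)) (?P n)"
  proof (rule poly_eq_poly_eq_iff[THEN iffD1], rule ext)
    fix t
    have h: "poly (JD a b (JD a b (Xp (?P n))) - smult 2 (JD a b (Xp (JD a b (?P n)))) + Xp (JD a b (JD a b (?P n)))) t
    = poly (smult (-2) (JD a b (Xp (?P n)) + Xp (JD a b (?P n))) + smult (gg^2-1) (Xp (?P n)) + smult 2 (JD a b (?P n))
      + smult ((a+1)*(1-gg)) (?P n)) t" using F5[of a b "?P n"] by (simp add: gg_def)
    show "poly (Q (Xp (?P n))) t = poly (smult (2 * \<mu> n + (a+1)*(1-gg)) (?P n)) t"
      using h unfolding Q_def by (simp add: JDP JD_smult Xp_smult algebra_simps power2_eq_square)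
  qed
  define K where "K = 2 * \<mu> n + (a+1)*(1-gg) - w * qv n"
  have QE: "Q (if n = 0 then 0 else smult w' (?P (n-1))) = 0" using qvP by (auto simp: Qlin QP)
  have QR0: "Q r = Q (Xp (?P n)) - Q (?P (Suc n)) - Q (smult w (?P n)) - Q (if n = 0 then 0 else smult w' (?P (n-1)))"
    unfolding r_def r1_def r0_def by (simp only: Qlin(1))
  have QR: "Q r = smult K (?P n)"
    unfolding QR0 QE K_def
    by (rule poly_eq_poly_eq_iff[THEN iffD1], simp add: fun_eq_iff Qlin QX QP qvS qvP algebra_simps)
  have pres: "coeff (Q p) j = 0" if "\<And>j. j \<ge> m \<Longrightarrow> coeff p j = 0" "j \<ge> m" for p m j
  proof -
    have "coeff (JD a b p) i = 0" if "i \<ge> m" for i using coeff_JD_zero[of m p i] that \<open>\<And>j. j \<ge> m \<Longrightarrow> coeff p j = 0\<close> by blast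
    note h1 = this
    then have "coeff (JD a b (JD a b p)) j = 0" using coeff_JD_zero[of m "JD a b p" j] that by blast
    then show ?thesis using that h1[of j] by (simp add: Q_def)
  qed
  have "coeff (Q r) n = 0" using pres[of n r n] rz by simp
  then have "K = 0" using QR lead[of n] by simp
  then have Q0: "Q r = 0" using QR by simp
  have "r = 0"
  proof (rule ccontr)
    assume rnz: "r \<noteq> 0"
    define d where "d = degree r"
    have cd: "coeff r d \<noteq> 0" using rnz by (simp add: d_def)
    have dn: "d + 2 \<le> n" using rz[of d] cd by (cases "d + 1 \<ge> n") auto
    have above: "coeff r j = 0" if "j \<ge> d + 1" for j using that by (simp add: d_def coeff_eq_0)
    have j1: "coeff (JD a b r) d = \<mu> d * coeff r d"
      using above[of "d+1"] by (simp add: coeff_JD \<mu>_def algebra_simps)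
    have j1z: "coeff (JD a b r) j = 0" if "j \<ge> d+1" for j using coeff_JD_zero[OF above that] .
    have j2: "coeff (JD a b (JD a b r)) d = \<mu> d * coeff (JD a b r) d"
      using j1z[of "d+1"] by (simp add: coeff_JD \<mu>_def algebra_simps)
    have "coeff (Q r) d = qv d * coeff r d"
      by (simp add: Q_def j1 j2 qv_def algebra_simps power2_eq_square)
    then have "qv d = 0" using Q0 cd by simp
    then have "(real d - real n)^2 = 1 \<or> (real d + real n + gg)^2 = 1" by (simp add: qv_fact)
    moreover have "(real d - real n)^2 \<noteq> 1"
    proof -
      have "real n - real d \<ge> 2" using dn by linarith
      then have "(real n - real d)^2 \<ge> 2^2" by (intro power_mono) auto
      then have "(real d - real n)^2 \<ge> 4" by (simp add: power2_commute)
      then show ?thesis by linarith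
    qed
    moreover have "(real d + real n + gg)^2 \<noteq> 1"
    proof
      assume "(real d + real n + gg)^2 = 1"
      then have "real d + real n + gg = 1 \<or> real d + real n + gg = -1"
        using power2_eq_1_iff by blast
      then have "a + b = - real d - real n \<or> a + b = - real d - real n - 2" by (auto simp: gg_def)
      then have "a + b \<in> \<int>" by auto
      with g show False by simp
    qed
    ultimately show False by blast
  qed
  then have "Xp (?P n) = ?P (Suc n) + smult w (?P n) + (if n = 0 then 0 else smult w' (?P (n-1)))"
    unfolding r_def r1_def r0_def by (simp only: diff_diff_eq add.assoc right_minus_eq)
  then show ?thesis by blast
qed



theorem mainTheorem5:
  fixes \<alpha> \<beta> \<nu>1 \<nu>2 \<tau>0 \<tau>1 \<tau>2 \<tau>3 :: real
  assumes "\<tau>1 + \<tau>2 = 1"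
    and "\<tau>2 = (1 + \<nu>1 - \<nu>2) / 2"
    and "\<tau>3 = \<nu>1 * \<nu>2 + (\<alpha> + \<beta>) * (\<nu>1 + \<nu>2 - 1) / 2"
    and "\<alpha> + \<nu>1 + \<nu>2 \<notin> \<int>"
  defines "\<psi> \<equiv> (\<lambda>(n::nat) (x::real).
              x powr (\<nu>2 - 1) * jacobi_monic (- \<alpha> - \<beta> - \<nu>1 - \<nu>2) \<beta> n (1 / x))"
  shows "(\<forall>n::nat. \<forall>x\<in>{0<..<1::real}.
            Mop \<alpha> \<beta> \<tau>0 \<tau>1 \<tau>2 \<tau>3 (\<psi> n) x
              = (real n * (real n - 1) + (2 - \<nu>1 - \<nu>2 - \<alpha>) * real n + \<tau>0 + \<nu>1 * \<nu>2
                 + (\<alpha> - 1) * (\<nu>1 + \<nu>2 - 1) / 2) * \<psi> n x)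
       \<and> (\<forall>n::nat. \<exists>\<xi> \<eta> \<zeta> :: real. \<forall>x\<in>{0<..<1::real}.
            Lop \<alpha> \<beta> (\<psi> n) x
              = \<xi> * \<psi> (Suc n) x + \<eta> * \<psi> n x + \<zeta> * (if n = 0 then 0 else \<psi> (n - 1) x))"
proof -
  define a where "a = - \<alpha> - \<beta> - \<nu>1 - \<nu>2"
  define s where "s = \<nu>2 - 1"
  let ?P = "JP a \<beta>"
  have g: "a + \<beta> \<notin> \<int>"
  proof
    assume "a + \<beta> \<in> \<int>"
    then have "- (a + \<beta>) \<in> \<int>" using Ints_minus by blast
    then show False using assms(4) by (simp add: a_def algebra_simps)
  qed
  define \<mu> where "\<mu> m = - (real m * (real m + a + \<beta> + 1))" for m
  have JDP: "JD a \<beta> (?P m) = smult (\<mu> m) (?P m)" for m by (simp add: JD_JP \<mu>_def)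
  have psi: "\<psi> m y = y powr s * poly (?P m) (1/y)" for m y
    by (simp add: \<psi>_def s_def a_def poly_JP)
  have t1: "\<tau>1 = (1 - \<nu>1 + \<nu>2)/2" using assms(1,2) by (simp add: field_simps)
  have part1: "Mop \<alpha> \<beta> \<tau>0 \<tau>1 \<tau>2 \<tau>3 (\<psi> n) x
              = (real n * (real n - 1) + (2 - \<nu>1 - \<nu>2 - \<alpha>) * real n + \<tau>0 + \<nu>1 * \<nu>2
                 + (\<alpha> - 1) * (\<nu>1 + \<nu>2 - 1) / 2) * \<psi> n x" if x: "x \<in> {0<..<1::real}" for n x
  proof -
    have x0: "x > 0" using x by simp
    define t where "t = 1 / x"
    have L1: "Lop \<alpha> \<beta> (\<psi> n) x = x powr s * poly (Lt \<alpha> \<beta> s (?P n)) t"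
      using Lop_form[of "\<psi> n" s "?P n" x] psi x0 by (simp add: t_def)
    have L2: "Lop \<alpha> \<beta> (\<lambda>y. y * \<psi> n y) x = x powr (s+1) * poly (Lt \<alpha> \<beta> (s+1) (?P n)) t"
      using Lop_form[of "\<lambda>y. y * \<psi> n y" "s+1" "?P n" x] psi x0 by (simp add: t_def powr_add)
    have ev: "poly (smult ((1 - \<nu>1 + \<nu>2)/2) (Lt \<alpha> \<beta> (\<nu>2-1) (?P n)) + smult ((1 + \<nu>1 - \<nu>2)/2) (Lt \<alpha> \<beta> (\<nu>2-1+1) (?P n))
     + smult (\<nu>1 * \<nu>2 + (\<alpha> + \<beta>) * (\<nu>1 + \<nu>2 - 1) / 2) (?P n) + smult \<tau>0 (Xp (?P n))) t
    = poly (smult (\<tau>0 + \<nu>1 * \<nu>2 + (\<alpha> - 1) * (\<nu>1 + \<nu>2 - 1) / 2) (Xp (?P n)) - Xp (JD (-\<alpha>-\<beta>-\<nu>1-\<nu>2) \<beta> (?P n))) t"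
      using Mid[of \<nu>1 \<nu>2 \<alpha> \<beta> "?P n" \<tau>0] by simp
    have ev2: "\<tau>1 * poly (Lt \<alpha> \<beta> s (?P n)) t + \<tau>2 * poly (Lt \<alpha> \<beta> (s+1) (?P n)) t
       + \<tau>3 * poly (?P n) t + \<tau>0 * (t * poly (?P n) t)
      = (\<tau>0 + \<nu>1 * \<nu>2 + (\<alpha> - 1) * (\<nu>1 + \<nu>2 - 1) / 2) * (t * poly (?P n) t) - t * (\<mu> n * poly (?P n) t)"
      using ev JDP[of n] unfolding t1 assms(2,3) s_def a_def[symmetric] by (simp add: Xp_def algebra_simps)
    have xs: "x powr (s+1) = x powr s * x" using x0 by (simp add: powr_add)
    have "Mop \<alpha> \<beta> \<tau>0 \<tau>1 \<tau>2 \<tau>3 (\<psi> n) x = x powr s * x * (\<tau>1 * poly (Lt \<alpha> \<beta> s (?P n)) t + \<tau>2 * poly (Lt \<alpha> \<beta> (s+1) (?P n)) t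
       + \<tau>3 * poly (?P n) t + \<tau>0 * (t * poly (?P n) t))"
      unfolding Mop_def L1 L2 xs unfolding psi using x0 by (simp add: t_def field_simps)
    also have "\<dots> = x powr s * x * ((\<tau>0 + \<nu>1 * \<nu>2 + (\<alpha> - 1) * (\<nu>1 + \<nu>2 - 1) / 2) * (t * poly (?P n) t) - t * (\<mu> n * poly (?P n) t))"
      by (simp only: ev2)
    also have "\<dots> = (real n * (real n - 1) + (2 - \<nu>1 - \<nu>2 - \<alpha>) * real n + \<tau>0 + \<nu>1 * \<nu>2
                 + (\<alpha> - 1) * (\<nu>1 + \<nu>2 - 1) / 2) * \<psi> n x"
      unfolding psi using x0 by (simp add: t_def \<mu>_def a_def field_simps)
    finally show ?thesis .
  qed
  have part2: "\<exists>\<xi> \<eta> \<zeta> :: real. \<forall>x\<in>{0<..<1::real}.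
            Lop \<alpha> \<beta> (\<psi> n) x
              = \<xi> * \<psi> (Suc n) x + \<eta> * \<psi> n x + \<zeta> * (if n = 0 then 0 else \<psi> (n - 1) x)" for n
  proof -
    obtain w w' where W: "Xp (?P n) = ?P (Suc n) + smult w (?P n) + (if n = 0 then 0 else smult w' (?P (n-1)))"
      using tri[OF g] by blast
    define c2 where "c2 = (2 * s + \<alpha> + \<beta> + 1 + a)/2"
    define c3 where "c3 = s * (s + \<alpha>) + c2 * (a + \<beta> + 2)"
    define c4 where "c4 = -s * (s + \<alpha> + \<beta> + 1) - c2 * (a + 1)"
    have F: "Lt \<alpha> \<beta> s (?P n) = smult (-1-c2) (Xp (JD a \<beta> (?P n))) + smult c2 (JD a \<beta> (Xp (?P n)))
     + smult c3 (Xp (?P n)) + smult c4 (?P n)"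
      unfolding c2_def c3_def c4_def by (rule F6)
    have JX: "JD a \<beta> (Xp (?P n)) = smult (\<mu> (Suc n)) (?P (Suc n)) + smult (w * \<mu> n) (?P n)
        + (if n = 0 then 0 else smult (w' * \<mu> (n-1)) (?P (n-1)))"
      unfolding W by (simp add: JD_add JD_smult JDP JD_0)
    define \<xi> where "\<xi> = (-1-c2) * \<mu> n + c2 * \<mu> (Suc n) + c3"
    define \<eta> where "\<eta> = ((-1-c2) * \<mu> n + c3 + c2 * \<mu> n) * w + c4"
    define \<zeta> where "\<zeta> = ((-1-c2) * \<mu> n + c2 * \<mu> (n-1) + c3) * w'"
    have LP: "Lt \<alpha> \<beta> s (?P n) = smult \<xi> (?P (Suc n)) + smult \<eta> (?P n)
       + (if n = 0 then 0 else smult \<zeta> (?P (n-1)))"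
    proof (rule poly_eq_poly_eq_iff[THEN iffD1], rule ext)
      fix t
      have w1: "t * poly (?P n) t = poly (?P (Suc n)) t + w * poly (?P n) t + (if n = 0 then 0 else w' * poly (?P (n-1)) t)"
        using arg_cong[OF W, of "\<lambda>p. poly p t"] by (simp add: Xp_def)
      have w2: "poly (JD a \<beta> (Xp (?P n))) t = \<mu> (Suc n) * poly (?P (Suc n)) t + w * \<mu> n * poly (?P n) t
        + (if n = 0 then 0 else w' * \<mu> (n-1) * poly (?P (n-1)) t)"
        using arg_cong[OF JX, of "\<lambda>p. poly p t"] by simp
      have w3: "poly (Lt \<alpha> \<beta> s (?P n)) t = (-1-c2) * (t * (\<mu> n * poly (?P n) t)) + c2 * poly (JD a \<beta> (Xp (?P n))) t
        + c3 * (t * poly (?P n) t) + c4 * poly (?P n) t"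
        using arg_cong[OF F, of "\<lambda>p. poly p t"] by (simp add: JDP Xp_def)
      have w4: "t * (\<mu> n * poly (?P n) t) = \<mu> n * (t * poly (?P n) t)" by simp
      show "poly (Lt \<alpha> \<beta> s (?P n)) t = poly (smult \<xi> (?P (Suc n)) + smult \<eta> (?P n)
       + (if n = 0 then 0 else smult \<zeta> (?P (n-1)))) t"
        unfolding w3 w4 w2 w1 \<xi>_def \<eta>_def \<zeta>_def by (cases "n = 0") (simp_all add: algebra_simps)
    qed
    have "\<forall>x\<in>{0<..<1::real}. Lop \<alpha> \<beta> (\<psi> n) x
              = \<xi> * \<psi> (Suc n) x + \<eta> * \<psi> n x + \<zeta> * (if n = 0 then 0 else \<psi> (n - 1) x)"
    proof
      fix x :: real assume x: "x \<in> {0<..<1}"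
      have "Lop \<alpha> \<beta> (\<psi> n) x = x powr s * poly (Lt \<alpha> \<beta> s (?P n)) (1/x)"
        using Lop_form[of "\<psi> n" s "?P n" x] psi x by simp
      then show "Lop \<alpha> \<beta> (\<psi> n) x
              = \<xi> * \<psi> (Suc n) x + \<eta> * \<psi> n x + \<zeta> * (if n = 0 then 0 else \<psi> (n - 1) x)"
        unfolding LP psi by (cases "n = 0") (simp_all add: algebra_simps)
    qed
    then show ?thesis by blast
  qed
  show ?thesis using part1 part2 by blast
qed

end
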